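(* Let $m,n\ge 1$, $A=[a_{ij}]$ an $m\times n$ matrix with entries in $\mathbb{R}\cup\{-\infty\}$, and $B=[b_{ji}]$ an $n\times m$ matrix with entries in $\mathbb{R}\cup\{+\infty\}$. Let $\lambda\in\mathbb{R}$ be an eigenvalue of the bipartite min-max-plus system $\mathcal{M}$ defined by $A,B$, let $A_\lambda=-\lambda\otimes A$, $B_\lambda=-\lambda\otimes B$, and define the sequence $x^*(l+1)=\mathcal{N}(x^*(l))$ for $l=0,1,2,\dots$ from an initial state vector $x^*(0)$. Suppose $x^*(r)=x^*(s)$ for some integers $r>s\ge 0$ and let $v=x^*(s)\oplus x^*(s+1)\oplus\cdots\oplus x^*(r-1)$. Then $\mathcal{N}(v)\ge v$ (componentwise).
   Context: Notation: $\epsilon=-\infty$, $\tau=+\infty$. For scalars, $r\oplus s=\max\{r,s\}$, $r\oplus' s=\min\{r,s\}$, $r\otimes s=r+s$; $\oplus$ of vectors is the componentwise maximum. For a scalar $\alpha\in\mathbb{R}$ and a matrix or vector $X$, $\alpha\otimes X$ adds $\alpha$ to every entry (infinite entries are unchanged). Max-plus product: $(A\otimes w)_i=\max_{1\le j\le n}(a_{ij}+w_j)$; min-plus product: $(B\otimes' u)_j=\min_{1\le i\le m}(b_{ji}+u_i)$. Convention for infinite sums: $-\infty+x=-\infty$ for $x\ne+\infty$, $+\infty+x=+\infty$ for $x\ne-\infty$, and in max-plus products $-\infty$ is absorbing while in min-plus products $+\infty$ is absorbing. For $v=\begin{pmatrix}u\\ w\end{pmatrix}$ ($u$ of length $m$,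 $w$ of length $n$): $\mathcal{M}(v)=\begin{pmatrix}A\otimes w\\ B\otimes' u\end{pmatrix}$ and $\mathcal{N}(v)=\begin{pmatrix}A_\lambda\otimes w\\ B_\lambda\otimes' u\end{pmatrix}$. A real number $\lambda$ is an eigenvalue of the system $x(l+1)=\mathcal{M}(x(l))$ if there exists $v\in\mathbb{R}^{m+n}$ with $\mathcal{M}(v)=\lambda\otimes v$. *)

theory Defs
  imports Complex_Main "HOL-Library.Extended_Real"
begin

definition mp_times :: "ereal \<Rightarrow> ereal \<Rightarrow> ereal" where
  "mp_times a b = (if a = -\<infinity> \<or> b = -\<infinity> then -\<infinity> else a + b)"

definition mp_times' :: "ereal \<Rightarrow> ereal \<Rightarrow> ereal" where
  "mp_times' a b = (if a = \<infinity> \<or> b = \<infinity> then \<infinity> else a + b)"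

text \<open>Vectors of length k are functions \<open>nat \<Rightarrow> ereal\<close>, only indices \<open>< k\<close> matter.
  An \<open>m\<times>n\<close> matrix is \<open>nat \<Rightarrow> nat \<Rightarrow> ereal\<close> with indices \<open>i < m\<close>, \<open>j < n\<close>.\<close>

definition maxplus_mv :: "(nat \<Rightarrow> nat \<Rightarrow> ereal) \<Rightarrow> nat \<Rightarrow> (nat \<Rightarrow> ereal) \<Rightarrow> nat \<Rightarrow> ereal" where
  "maxplus_mv A n w i = Max ((\<lambda>j. mp_times (A i j) (w j)) ` {..<n})"

definition minplus_mv :: "(nat \<Rightarrow> nat \<Rightarrow> ereal) \<Rightarrow> nat \<Rightarrow> (nat \<Rightarrow> ereal) \<Rightarrow> nat \<Rightarrow> ereal" where
  "minplus_mv B m u j = Min ((\<lambda>i. mp_times' (B j i) (u i)) ` {..<m})"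

definition bip_sys :: "nat \<Rightarrow> nat \<Rightarrow> (nat \<Rightarrow> nat \<Rightarrow> ereal) \<Rightarrow> (nat \<Rightarrow> nat \<Rightarrow> ereal)
    \<Rightarrow> (nat \<Rightarrow> ereal) \<times> (nat \<Rightarrow> ereal) \<Rightarrow> (nat \<Rightarrow> ereal) \<times> (nat \<Rightarrow> ereal)" where
  "bip_sys m n A B v = (maxplus_mv A n (snd v), minplus_mv B m (fst v))"

definition scal_mat :: "real \<Rightarrow> (nat \<Rightarrow> nat \<Rightarrow> ereal) \<Rightarrow> nat \<Rightarrow> nat \<Rightarrow> ereal" where
  "scal_mat \<alpha> X i j = ereal \<alpha> + X i j"

definition scal_vec :: "real \<Rightarrow> (nat \<Rightarrow> ereal) \<Rightarrow> nat \<Rightarrow> ereal" where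
  "scal_vec \<alpha> x i = ereal \<alpha> + x i"

definition finite_vec :: "nat \<Rightarrow> (nat \<Rightarrow> ereal) \<Rightarrow> bool" where
  "finite_vec k x \<longleftrightarrow> (\<forall>i<k. \<bar>x i\<bar> \<noteq> \<infinity>)"

definition is_eigenvalue :: "nat \<Rightarrow> nat \<Rightarrow> (nat \<Rightarrow> nat \<Rightarrow> ereal) \<Rightarrow> (nat \<Rightarrow> nat \<Rightarrow> ereal) \<Rightarrow> real \<Rightarrow> bool" where
  "is_eigenvalue m n A B lam \<longleftrightarrow>
     (\<exists>u w. finite_vec m u \<and> finite_vec n w \<and>
        (\<forall>i<m. fst (bip_sys m n A B (u, w)) i = scal_vec lam u i) \<and>
        (\<forall>j<n. snd (bip_sys m n A B (u, w)) j = scal_vec lam w j))"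

definition state_le :: "nat \<Rightarrow> nat \<Rightarrow> (nat \<Rightarrow> ereal) \<times> (nat \<Rightarrow> ereal) \<Rightarrow> (nat \<Rightarrow> ereal) \<times> (nat \<Rightarrow> ereal) \<Rightarrow> bool" where
  "state_le m n v v' \<longleftrightarrow> (\<forall>i<m. fst v i \<le> fst v' i) \<and> (\<forall>j<n. snd v j \<le> snd v' j)"

end

theory Submission
  imports Defs
begin

lemma mp_times_mono: "b \<le> b' \<Longrightarrow> mp_times a b \<le> mp_times a b'"
  unfolding mp_times_def by (auto intro: add_left_mono)

lemma mp_times'_mono: "b \<le> b' \<Longrightarrow> mp_times' a b \<le> mp_times' a b'"
  unfolding mp_times'_def by (auto intro: add_left_mono)

lemma maxplus_mono:
  assumes "n \<ge> 1" "\<forall>j<n. w j \<le> w' j"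
  shows "maxplus_mv A n w i \<le> maxplus_mv A n w' i"
  unfolding maxplus_mv_def
proof (subst Max_le_iff)
  show "finite ((\<lambda>j. mp_times (A i j) (w j)) ` {..<n})" by simp
  show "(\<lambda>j. mp_times (A i j) (w j)) ` {..<n} \<noteq> {}" using assms(1) by (auto simp: lessThan_empty_iff)
  show "\<forall>a\<in>(\<lambda>j. mp_times (A i j) (w j)) ` {..<n}. a \<le> Max ((\<lambda>j. mp_times (A i j) (w' j)) ` {..<n})"
  proof
    fix a assume "a \<in> (\<lambda>j. mp_times (A i j) (w j)) ` {..<n}"
    then obtain j where j: "j < n" "a = mp_times (A i j) (w j)" by auto
    have "a \<le> mp_times (A i j) (w' j)" using j assms mp_times_mono by auto
    also have "\<dots> \<le> Max ((\<lambda>j. mp_times (A i j) (w' j)) ` {..<n})"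
      using j by (intro Max_ge) auto
    finally show "a \<le> Max ((\<lambda>j. mp_times (A i j) (w' j)) ` {..<n})" .
  qed
qed

lemma minplus_mono:
  assumes "m \<ge> 1" "\<forall>i<m. u i \<le> u' i"
  shows "minplus_mv B m u j \<le> minplus_mv B m u' j"
  unfolding minplus_mv_def
proof (subst Min_ge_iff)
  show "finite ((\<lambda>i. mp_times' (B j i) (u' i)) ` {..<m})" by simp
  show "(\<lambda>i. mp_times' (B j i) (u' i)) ` {..<m} \<noteq> {}" using assms(1) by (auto simp: lessThan_empty_iff)
  show "\<forall>a\<in>(\<lambda>i. mp_times' (B j i) (u' i)) ` {..<m}. Min ((\<lambda>i. mp_times' (B j i) (u i)) ` {..<m}) \<le> a"
  proof
    fix a assume "a \<in> (\<lambda>i. mp_times' (B j i) (u' i)) ` {..<m}"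
    then obtain i where i: "i < m" "a = mp_times' (B j i) (u' i)" by auto
    have "Min ((\<lambda>i. mp_times' (B j i) (u i)) ` {..<m}) \<le> mp_times' (B j i) (u i)"
      using i by (intro Min_le) auto
    also have "\<dots> \<le> a" using i assms mp_times'_mono by auto
    finally show "Min ((\<lambda>i. mp_times' (B j i) (u i)) ` {..<m}) \<le> a" .
  qed
qed

lemma sys_mono:
  assumes "m \<ge> 1" "n \<ge> 1" "state_le m n v v'"
  shows "state_le m n (bip_sys m n A B v) (bip_sys m n A B v')"
  using assms maxplus_mono minplus_mono unfolding state_le_def bip_sys_def by auto

theorem theorem3:
  fixes m n :: nat and A B :: "nat \<Rightarrow> nat \<Rightarrow> ereal" and lam :: real
    and x :: "nat \<Rightarrow> (nat \<Rightarrow> ereal) \<times> (nat \<Rightarrow> ereal)" and r s :: nat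
  assumes "m \<ge> 1" and "n \<ge> 1"
    and "\<forall>i<m. \<forall>j<n. A i j \<noteq> \<infinity>"
    and "\<forall>j<n. \<forall>i<m. B j i \<noteq> -\<infinity>"
    and "is_eigenvalue m n A B lam"
    and "finite_vec m (fst (x 0))" and "finite_vec n (snd (x 0))"
    and "\<forall>l. x (Suc l) = bip_sys m n (scal_mat (-lam) A) (scal_mat (-lam) B) (x l)"
    and "s < r" and "x r = x s"
  shows "let v = ((\<lambda>i. Max ((\<lambda>l. fst (x l) i) ` {s..<r})),
                  (\<lambda>j. Max ((\<lambda>l. snd (x l) j) ` {s..<r})))
         in state_le m n v (bip_sys m n (scal_mat (-lam) A) (scal_mat (-lam) B) v)"
proof -
  define N where "N = bip_sys m n (scal_mat (-lam) A) (scal_mat (-lam) B)"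
  define v where "v = ((\<lambda>i. Max ((\<lambda>l. fst (x l) i) ` {s..<r})),
                  (\<lambda>j. Max ((\<lambda>l. snd (x l) j) ` {s..<r})))"
  have le: "state_le m n (x l) v" if "l \<in> {s..<r}" for l
    using that unfolding state_le_def v_def by (auto intro: Max_ge)
  have le2: "state_le m n (x k) (N v)" if k: "k \<in> {s..<r}" for k
  proof -
    obtain l where l: "l \<in> {s..<r}" "x k = x (Suc l)"
    proof (cases "k = s")
      case True
      then show ?thesis using that[of "r - 1"] assms(9,10) by auto
    next
      case False
      have "Suc (k - 1) = k" using False k by auto
      show ?thesis
      proof (rule that[of "k - 1"])
        show "k - 1 \<in> {s..<r}" using False k by auto
        show "x k = x (Suc (k - 1))" using \<open>Suc (k - 1) = k\<close> by simp
      qed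
    qed
    have "state_le m n (N (x l)) (N v)"
      unfolding N_def by (rule sys_mono[OF assms(1,2) le[OF l(1)]])
    then show ?thesis using l assms(8) N_def by simp
  qed
  have "state_le m n v (N v)"
    unfolding state_le_def
  proof (intro conjI allI impI)
    fix i assume "i < m"
    show "fst v i \<le> fst (N v) i"
      unfolding v_def fst_conv using assms(9) le2 \<open>i < m\<close>
      by (subst Max_le_iff) (auto simp: state_le_def v_def)
  next
    fix j assume "j < n"
    show "snd v j \<le> snd (N v) j"
      unfolding v_def snd_conv using assms(9) le2 \<open>j < n\<close>
      by (subst Max_le_iff) (auto simp: state_le_def v_def)
  qed
  then show ?thesis unfolding v_def N_def Let_def by simp
qed

end
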